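(* Let $X$ be a finite uniconnected cycle set whose permutation group $\mathcal{G}(X)$ is a Dedekind group (every subgroup is normal). Then $X$ has finite multipermutation level.
   Context: A (non-degenerate) cycle set is a set $X$ with an operation such that each $\sigma_x:y\mapsto x\cdot y$ is bijective, $(x\cdot y)\cdot(x\cdot z)=(y\cdot x)\cdot(y\cdot z)$, and $x\mapsto x\cdot x$ is bijective. $\mathcal{G}(X)$ is the permutation group generated by $\{\sigma_x\mid x\in X\}$; $X$ is uniconnected if $\mathcal{G}(X)$ acts regularly on $X$. $\mathrm{Ret}(X)$ is the quotient of $X$ by $x\sim y\iff\sigma_x=\sigma_y$; $\mathrm{Ret}^0(X)=X$, $\mathrm{Ret}^i(X)=\mathrm{Ret}(\mathrm{Ret}^{i-1}(X))$; $X$ has finite multipermutation level if $|\mathrm{Ret}^n(X)|=1$ for some $n$. *)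

theory Defs
  imports "HOL-Algebra.Algebra"
begin

definition lmult :: "'a set \<Rightarrow> ('a \<Rightarrow> 'a \<Rightarrow> 'a) \<Rightarrow> 'a \<Rightarrow> ('a \<Rightarrow> 'a)" where
  "lmult A m x = (\<lambda>y\<in>A. m x y)"

definition cycle_set :: "'a set \<Rightarrow> ('a \<Rightarrow> 'a \<Rightarrow> 'a) \<Rightarrow> bool" where
  "cycle_set A m \<longleftrightarrow>
     (\<forall>x\<in>A. \<forall>y\<in>A. m x y \<in> A) \<and>
     (\<forall>x\<in>A. bij_betw (m x) A A) \<and>
     (\<forall>x\<in>A. \<forall>y\<in>A. \<forall>z\<in>A. m (m x y) (m x z) = m (m y x) (m y z))"

definition nondeg_cycle_set :: "'a set \<Rightarrow> ('a \<Rightarrow> 'a \<Rightarrow> 'a) \<Rightarrow> bool" where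
  "nondeg_cycle_set A m \<longleftrightarrow> cycle_set A m \<and> bij_betw (\<lambda>x. m x x) A A"

definition perm_group :: "'a set \<Rightarrow> ('a \<Rightarrow> 'a \<Rightarrow> 'a) \<Rightarrow> ('a \<Rightarrow> 'a) monoid" where
  "perm_group A m = (BijGroup A)\<lparr>carrier := generate (BijGroup A) (lmult A m ` A)\<rparr>"

definition uniconnected :: "'a set \<Rightarrow> ('a \<Rightarrow> 'a \<Rightarrow> 'a) \<Rightarrow> bool" where
  "uniconnected A m \<longleftrightarrow> A \<noteq> {} \<and>
     (\<forall>x\<in>A. \<forall>y\<in>A. \<exists>!g. g \<in> carrier (perm_group A m) \<and> g x = y)"

definition dedekind_group :: "('g, 'b) monoid_scheme \<Rightarrow> bool" where
  "dedekind_group G \<longleftrightarrow> group G \<and> (\<forall>H. subgroup H G \<longrightarrow> H \<lhd> G)"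

text \<open>Ret^i(A) is represented as the quotient of A by the
  equivalence relation ret_eq i: x ~_0 y iff x = y, and x ~_(i+1) y iff the
  classes of x and y in Ret^i(A) have the same left multiplication on Ret^i(A),
  i.e. [x z]_i = [y z]_i for all z in A (the operation on Ret^i(A) being the
  induced one [x]_i [z]_i = [x z]_i).\<close>
fun ret_eq :: "'a set \<Rightarrow> ('a \<Rightarrow> 'a \<Rightarrow> 'a) \<Rightarrow> nat \<Rightarrow> 'a \<Rightarrow> 'a \<Rightarrow> bool" where
  "ret_eq A m 0 x y = (x = y)"
| "ret_eq A m (Suc i) x y = (\<forall>z\<in>A. ret_eq A m i (m x z) (m y z))"

definition ret_rel :: "'a set \<Rightarrow> ('a \<Rightarrow> 'a \<Rightarrow> 'a) \<Rightarrow> nat \<Rightarrow> ('a \<times> 'a) set" where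
  "ret_rel A m i = {(x, y). x \<in> A \<and> y \<in> A \<and> ret_eq A m i x y}"

definition Ret_iter :: "'a set \<Rightarrow> ('a \<Rightarrow> 'a \<Rightarrow> 'a) \<Rightarrow> nat \<Rightarrow> 'a set set" where
  "Ret_iter A m i = A // ret_rel A m i"

definition finite_mpl :: "'a set \<Rightarrow> ('a \<Rightarrow> 'a \<Rightarrow> 'a) \<Rightarrow> bool" where
  "finite_mpl A m \<longleftrightarrow> (\<exists>n. card (Ret_iter A m n) = 1)"

end

theory Submission
  imports Defs
begin

lemma lmult_Bij: assumes "cycle_set A m" "x \<in> A" shows "lmult A m x \<in> Bij A"
proof -
  have "bij_betw (m x) A A" using assms unfolding cycle_set_def by auto
  then have "bij_betw (lmult A m x) A A" unfolding lmult_def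
    by (rule bij_betw_cong[THEN iffD1, rotated]) auto
  then show ?thesis unfolding Bij_def lmult_def by auto
qed

lemma pg_sub: assumes "cycle_set A m"
  shows "subgroup (carrier (perm_group A m)) (BijGroup A)"
proof -
  have "lmult A m ` A \<subseteq> carrier (BijGroup A)" using lmult_Bij[OF assms] by (auto simp: BijGroup_def)
  from group.generate_is_subgroup[OF group_BijGroup this] show ?thesis by (simp add: perm_group_def)
qed

lemma pg_group: assumes "cycle_set A m" shows "group (perm_group A m)"
proof -
  have "group ((BijGroup A)\<lparr>carrier := carrier (perm_group A m)\<rparr>)"
    by (rule subgroup.subgroup_is_group[OF pg_sub[OF assms] group_BijGroup])
  then show ?thesis unfolding perm_group_def by simp
qed

lemma pg_Bij: assumes "cycle_set A m" "g \<in> carrier (perm_group A m)" shows "g \<in> Bij A"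
  using subgroup.subset[OF pg_sub[OF assms(1)]] assms(2) by (auto simp: BijGroup_def)

lemma pg_mult: assumes "cycle_set A m" "g \<in> carrier (perm_group A m)" "h \<in> carrier (perm_group A m)"
  "z \<in> A" shows "(g \<otimes>\<^bsub>perm_group A m\<^esub> h) z = g (h z)"
  using pg_Bij[OF assms(1,2)] pg_Bij[OF assms(1,3)] assms(4)
  by (simp add: perm_group_def BijGroup_def compose_def)

lemma pg_one: "\<one>\<^bsub>perm_group A m\<^esub> = (\<lambda>x\<in>A. x)"
  by (simp add: perm_group_def BijGroup_def)

lemma pg_gen: assumes "x \<in> A" shows "lmult A m x \<in> carrier (perm_group A m)"
  using assms by (auto simp: perm_group_def intro: generate.incl)

lemma pg_induct:
  assumes cs: "cycle_set A m" and g: "g \<in> carrier (perm_group A m)"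
    and hone: "P (\<lambda>x\<in>A. x)"
    and hgen: "\<And>x. x \<in> A \<Longrightarrow> P (lmult A m x)"
    and hinv: "\<And>x. x \<in> A \<Longrightarrow> P (\<lambda>z\<in>A. inv_into A (lmult A m x) z)"
    and hmul: "\<And>g h. g \<in> carrier (perm_group A m) \<Longrightarrow> h \<in> carrier (perm_group A m) \<Longrightarrow> P g \<Longrightarrow> P h
       \<Longrightarrow> P (g \<otimes>\<^bsub>perm_group A m\<^esub> h)"
  shows "P g"
proof -
  have "g \<in> generate (BijGroup A) (lmult A m ` A)" using g by (simp add: perm_group_def)
  then show ?thesis
  proof (induction rule: generate.induct)
    case one
    have eq: "\<one>\<^bsub>BijGroup A\<^esub> = (\<lambda>x\<in>A. x)" by (simp add: BijGroup_def)
    show ?case by (subst eq) (rule hone)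
  next
    case (incl h)
    then show ?case using hgen by auto
  next
    case (inv h)
    then obtain x where x: "x \<in> A" "h = lmult A m x" by auto
    show ?case unfolding x(2) inv_BijGroup[OF lmult_Bij[OF cs x(1)]] by (rule hinv[OF x(1)])
  next
    case (eng h1 h2)
    have "h1 \<otimes>\<^bsub>BijGroup A\<^esub> h2 = h1 \<otimes>\<^bsub>perm_group A m\<^esub> h2" by (simp add: perm_group_def)
    then show ?case using hmul[of h1 h2] eng by (simp add: perm_group_def)
  qed
qed

lemma re_refl: "ret_eq A m n x x"
  by (induction n arbitrary: x) auto

lemma re_sym: "ret_eq A m n x y \<Longrightarrow> ret_eq A m n y x"
  by (induction n arbitrary: x y) auto

lemma re_trans: "ret_eq A m n x y \<Longrightarrow> ret_eq A m n y w \<Longrightarrow> ret_eq A m n x w"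
  by (induction n arbitrary: x y w) (simp, fastforce)

lemma re_mono: assumes cs: "cycle_set A m"
  shows "x \<in> A \<Longrightarrow> y \<in> A \<Longrightarrow> ret_eq A m n x y \<Longrightarrow> ret_eq A m (Suc n) x y"
proof (induction n arbitrary: x y)
  case 0
  then show ?case by (simp add: re_refl)
next
  case (Suc n)
  have cl: "\<And>a b. a \<in> A \<Longrightarrow> b \<in> A \<Longrightarrow> m a b \<in> A" using cs unfolding cycle_set_def by auto
  show ?case using Suc cl by simp
qed

lemma re_left: assumes cs: "cycle_set A m"
  shows "x \<in> A \<Longrightarrow> y \<in> A \<Longrightarrow> z \<in> A \<Longrightarrow> ret_eq A m n x y \<Longrightarrow> ret_eq A m n (m z x) (m z y)"
proof (induction n arbitrary: x y z)
  case 0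
  then show ?case by simp
next
  case (Suc n)
  have cl: "\<And>a b. a \<in> A \<Longrightarrow> b \<in> A \<Longrightarrow> m a b \<in> A" using cs unfolding cycle_set_def by auto
  have ci: "\<And>a b c. a \<in> A \<Longrightarrow> b \<in> A \<Longrightarrow> c \<in> A \<Longrightarrow> m (m a b) (m a c) = m (m b a) (m b c)"
    using cs unfolding cycle_set_def by auto
  have su: "m z ` A = A" using cs Suc.prems(3) unfolding cycle_set_def bij_betw_def by auto
  show ?case
  proof (simp, intro ballI)
    fix w assume w: "w \<in> A"
    then obtain u where u: "u \<in> A" "w = m z u" using su by auto
    have e1: "m (m z x) w = m (m x z) (m x u)" using ci[of z x u] u Suc.prems by simp
    have e2: "m (m z y) w = m (m y z) (m y u)" using ci[of z y u] u Suc.prems by simp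
    have h1: "ret_eq A m n (m x z) (m y z)" using Suc.prems by simp
    have h2: "ret_eq A m n (m x u) (m y u)" using Suc.prems u by simp
    have "ret_eq A m (Suc n) (m x z) (m y z)" using re_mono[OF cs _ _ h1] cl Suc.prems by simp
    then have a1: "ret_eq A m n (m (m x z) (m x u)) (m (m y z) (m x u))" using cl Suc.prems u by simp
    have a2: "ret_eq A m n (m (m y z) (m x u)) (m (m y z) (m y u))"
      using Suc.IH[OF _ _ _ h2] cl Suc.prems u by simp
    show "ret_eq A m n (m (m z x) w) (m (m z y) w)" using re_trans[OF a1 a2] e1 e2 by simp
  qed
qed

lemma fin_inv_closed:
  assumes "finite B" "bij_betw f B B" "S \<subseteq> B" "f ` S \<subseteq> S" "a \<in> S"
  shows "\<exists>s\<in>S. a = f s"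
proof -
  have inj: "inj_on f S" using assms(2,3) unfolding bij_betw_def by (auto intro: inj_on_subset)
  have fS: "finite S" using assms(1,3) finite_subset by auto
  have "card (f ` S) = card S" using card_image[OF inj] .
  then have "f ` S = S" using card_subset_eq[OF fS assms(4)] by simp
  then show ?thesis using assms(5) by auto
qed

lemma step:
  assumes fin: "finite A" and cs: "cycle_set A m" and uc: "uniconnected A m"
    and dd: "dedekind_group (perm_group A m)"
    and eqR: "equiv A R"
    and lc: "\<And>x y z. (x, y) \<in> R \<Longrightarrow> z \<in> A \<Longrightarrow> (m z x, m z y) \<in> R"
    and rc: "\<And>x y z. (x, y) \<in> R \<Longrightarrow> z \<in> A \<Longrightarrow> (m x z, m y z) \<in> R"
    and nt: "\<not> A \<times> A \<subseteq> R"
  shows "card (A // {(x, y). x \<in> A \<and> y \<in> A \<and> (\<forall>z\<in>A. (m x z, m y z) \<in> R)}) < card (A // R)"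
proof -
  define G where "G = perm_group A m"
  define R' where "R' = {(x, y). x \<in> A \<and> y \<in> A \<and> (\<forall>z\<in>A. (m x z, m y z) \<in> R)}"
  have grp: "group G" unfolding G_def by (rule pg_group[OF cs])
  interpret G: group G by (rule grp)
  have Rsub: "R \<subseteq> A \<times> A" using eqR equiv_type by blast
  have Rrefl: "\<And>a. a \<in> A \<Longrightarrow> (a, a) \<in> R" using eqR unfolding equiv_def refl_on_def by blast
  have Rsym: "\<And>a b. (a, b) \<in> R \<Longrightarrow> (b, a) \<in> R" using eqR unfolding equiv_def sym_def by blast
  have Rtrans: "\<And>a b c. (a, b) \<in> R \<Longrightarrow> (b, c) \<in> R \<Longrightarrow> (a, c) \<in> R"
    using eqR unfolding equiv_def trans_def by blast
  have cl: "\<And>a b. a \<in> A \<Longrightarrow> b \<in> A \<Longrightarrow> m a b \<in> A" using cs unfolding cycle_set_def by auto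
  have bij: "\<And>a. a \<in> A \<Longrightarrow> bij_betw (m a) A A" using cs unfolding cycle_set_def by auto
  have ci: "\<And>a b c. a \<in> A \<Longrightarrow> b \<in> A \<Longrightarrow> c \<in> A \<Longrightarrow> m (m a b) (m a c) = m (m b a) (m b c)"
    using cs unfolding cycle_set_def by auto
  have lm: "\<And>x z. z \<in> A \<Longrightarrow> lmult A m x z = m x z" by (simp add: lmult_def)
  have lminv: "\<And>x s. x \<in> A \<Longrightarrow> s \<in> A \<Longrightarrow> inv_into A (lmult A m x) (m x s) = s"
  proof -
    fix x s assume xs: "x \<in> A" "s \<in> A"
    have "inj_on (lmult A m x) A" using lmult_Bij[OF cs xs(1)] unfolding Bij_def bij_betw_def by auto
    then have "inv_into A (lmult A m x) (lmult A m x s) = s" using xs(2) by (rule inv_into_f_f)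
    then show "inv_into A (lmult A m x) (m x s) = s" using lm[OF xs(2)] by simp
  qed
  have Ane: "A \<noteq> {}" using uc unfolding uniconnected_def by auto
  then obtain x0 where x0: "x0 \<in> A" by auto
  have tr: "\<And>a b. a \<in> A \<Longrightarrow> b \<in> A \<Longrightarrow> \<exists>g\<in>carrier G. g a = b"
    using uc unfolding uniconnected_def G_def by blast
  have inA: "\<And>g z. g \<in> carrier G \<Longrightarrow> z \<in> A \<Longrightarrow> g z \<in> A"
    using pg_Bij[OF cs] unfolding G_def Bij_def bij_betw_def by blast
  have mult: "\<And>g h z. g \<in> carrier G \<Longrightarrow> h \<in> carrier G \<Longrightarrow> z \<in> A \<Longrightarrow> (g \<otimes>\<^bsub>G\<^esub> h) z = g (h z)"
    unfolding G_def using pg_mult[OF cs] by blast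
  have one: "\<And>z. z \<in> A \<Longrightarrow> \<one>\<^bsub>G\<^esub> z = z" unfolding G_def pg_one by simp
  have gen: "\<And>x. x \<in> A \<Longrightarrow> lmult A m x \<in> carrier G" unfolding G_def by (rule pg_gen)
  have presR: "\<And>g. g \<in> carrier G \<Longrightarrow> \<forall>a b. (a, b) \<in> R \<longrightarrow> (g a, g b) \<in> R"
  proof -
    fix g assume g: "g \<in> carrier G"
    show "\<forall>a b. (a, b) \<in> R \<longrightarrow> (g a, g b) \<in> R"
    proof (rule pg_induct[OF cs g[unfolded G_def]])
      show "\<forall>a b. (a, b) \<in> R \<longrightarrow> ((\<lambda>x\<in>A. x) a, (\<lambda>x\<in>A. x) b) \<in> R" using Rsub by auto
    next
      fix x assume x: "x \<in> A"
      show "\<forall>a b. (a, b) \<in> R \<longrightarrow> (lmult A m x a, lmult A m x b) \<in> R"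
        using lc x Rsub lm by auto
    next
      fix x assume x: "x \<in> A"
      show "\<forall>a b. (a, b) \<in> R \<longrightarrow> ((\<lambda>z\<in>A. inv_into A (lmult A m x) z) a, (\<lambda>z\<in>A. inv_into A (lmult A m x) z) b) \<in> R"
      proof (intro allI impI)
        fix a b assume ab: "(a, b) \<in> R"
        have fb: "finite (A \<times> A)" using fin by simp
        have bb: "bij_betw (map_prod (m x) (m x)) (A \<times> A) (A \<times> A)" using bij_betw_map_prod[OF bij[OF x] bij[OF x]] .
        have "map_prod (m x) (m x) ` R \<subseteq> R" using lc x by auto
        from fin_inv_closed[OF fb bb Rsub this ab] obtain p where p: "p \<in> R" "(a, b) = map_prod (m x) (m x) p" by blast
        obtain a' b' where ab': "p = (a', b')" by (cases p)
        have "a' \<in> A" "b' \<in> A" using p ab' Rsub by auto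
        then show "((\<lambda>z\<in>A. inv_into A (lmult A m x) z) a, (\<lambda>z\<in>A. inv_into A (lmult A m x) z) b) \<in> R"
          using p ab' lminv[OF x] cl[OF x] by auto
      qed
    next
      fix g h
      assume "g \<in> carrier (perm_group A m)" "h \<in> carrier (perm_group A m)"
        "\<forall>a b. (a, b) \<in> R \<longrightarrow> (g a, g b) \<in> R" "\<forall>a b. (a, b) \<in> R \<longrightarrow> (h a, h b) \<in> R"
      then show "\<forall>a b. (a, b) \<in> R \<longrightarrow> ((g \<otimes>\<^bsub>perm_group A m\<^esub> h) a, (g \<otimes>\<^bsub>perm_group A m\<^esub> h) b) \<in> R"
        using mult[unfolded G_def] Rsub by auto
    qed
  qed
  define H where "H = {g \<in> carrier G. (g x0, x0) \<in> R}"
  have subH: "subgroup H G"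
  proof (rule group.subgroupI[OF grp])
    show "H \<subseteq> carrier G" unfolding H_def by auto
    show "H \<noteq> {}" using one x0 Rrefl monoid.one_closed[OF group.is_monoid[OF grp]] unfolding H_def by auto
  next
    fix a assume a: "a \<in> H"
    then have ac: "a \<in> carrier G" and ar: "(a x0, x0) \<in> R" unfolding H_def by auto
    have ic: "inv\<^bsub>G\<^esub> a \<in> carrier G" using group.inv_closed[OF grp ac] .
    have "((inv\<^bsub>G\<^esub> a) (a x0), (inv\<^bsub>G\<^esub> a) x0) \<in> R" using presR[OF ic] ar by blast
    moreover have "(inv\<^bsub>G\<^esub> a) (a x0) = x0"
      using mult[OF ic ac x0] group.l_inv[OF grp ac] one[OF x0] by simp
    ultimately show "inv\<^bsub>G\<^esub> a \<in> H" unfolding H_def using ic Rsym by auto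
  next
    fix a b assume "a \<in> H" "b \<in> H"
    then have ac: "a \<in> carrier G" "(a x0, x0) \<in> R" "b \<in> carrier G" "(b x0, x0) \<in> R" unfolding H_def by auto
    have "(a (b x0), a x0) \<in> R" using presR[OF ac(1)] ac(4) by blast
    then have "((a \<otimes>\<^bsub>G\<^esub> b) x0, x0) \<in> R" using mult[OF ac(1) ac(3) x0] Rtrans ac(2) by simp
    then show "a \<otimes>\<^bsub>G\<^esub> b \<in> H" unfolding H_def using monoid.m_closed[OF group.is_monoid[OF grp] ac(1) ac(3)] by auto
  qed
  have norm: "H \<lhd> G" using dd subH unfolding dedekind_group_def G_def by blast
  have Htriv: "\<And>h z. h \<in> H \<Longrightarrow> z \<in> A \<Longrightarrow> (h z, z) \<in> R"
  proof -
    fix h z assume h: "h \<in> H" and z: "z \<in> A"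
    have hc: "h \<in> carrier G" using h unfolding H_def by auto
    obtain g where g: "g \<in> carrier G" "g x0 = z" using tr[OF x0 z] by blast
    define k where "k = inv\<^bsub>G\<^esub> g \<otimes>\<^bsub>G\<^esub> h \<otimes>\<^bsub>G\<^esub> g"
    have kH: "k \<in> H" unfolding k_def using normal.inv_op_closed1[OF norm g(1) h] .
    then have kc: "k \<in> carrier G" and kr: "(k x0, x0) \<in> R" unfolding H_def by auto
    have ic: "inv\<^bsub>G\<^esub> g \<in> carrier G" using group.inv_closed[OF grp g(1)] .
    have "g \<otimes>\<^bsub>G\<^esub> k = h \<otimes>\<^bsub>G\<^esub> g" unfolding k_def
      using g(1) hc ic by (simp add: G.m_assoc[symmetric])
    then have "g (k x0) = h z" using mult[OF g(1) kc x0] mult[OF hc g(1) x0] g(2) by simp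
    moreover have "(g (k x0), g x0) \<in> R" using presR[OF g(1)] kr by blast
    ultimately show "(h z, z) \<in> R" using g(2) by simp
  qed
  have claim1: "\<And>x y. x \<in> A \<Longrightarrow> y \<in> A \<Longrightarrow> (m x x0, m y x0) \<in> R \<Longrightarrow> (x, y) \<in> R'"
  proof -
    fix x y assume x: "x \<in> A" and y: "y \<in> A" and r: "(m x x0, m y x0) \<in> R"
    define sx where "sx = lmult A m x"
    define sy where "sy = lmult A m y"
    have sxc: "sx \<in> carrier G" and syc: "sy \<in> carrier G" unfolding sx_def sy_def using gen x y by auto
    have ic: "inv\<^bsub>G\<^esub> sx \<in> carrier G" using group.inv_closed[OF grp sxc] .
    define k where "k = inv\<^bsub>G\<^esub> sx \<otimes>\<^bsub>G\<^esub> sy"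
    have kc: "k \<in> carrier G" unfolding k_def using monoid.m_closed[OF group.is_monoid[OF grp] ic syc] .
    have "((inv\<^bsub>G\<^esub> sx) (sy x0), (inv\<^bsub>G\<^esub> sx) (sx x0)) \<in> R"
      using presR[OF ic] r Rsym lm[OF x0] unfolding sx_def sy_def by auto
    moreover have "(inv\<^bsub>G\<^esub> sx) (sx x0) = x0"
      using mult[OF ic sxc x0] group.l_inv[OF grp sxc] one[OF x0] by simp
    moreover have "k x0 = (inv\<^bsub>G\<^esub> sx) (sy x0)" unfolding k_def using mult[OF ic syc x0] .
    ultimately have kH: "k \<in> H" unfolding H_def using kc by auto
    have sy_eq: "sy = sx \<otimes>\<^bsub>G\<^esub> k" unfolding k_def
      using sxc syc ic by (simp add: G.m_assoc[symmetric])
    have "\<forall>z\<in>A. (m x z, m y z) \<in> R"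
    proof
      fix z assume z: "z \<in> A"
      have "m y z = sx (k z)" using sy_eq mult[OF sxc kc z] lm[OF z] unfolding sy_def by metis
      moreover have "(sx (k z), sx z) \<in> R" using presR[OF sxc] Htriv[OF kH z] by blast
      ultimately show "(m x z, m y z) \<in> R" using Rsym lm[OF z] unfolding sx_def by auto
    qed
    then show "(x, y) \<in> R'" unfolding R'_def using x y by auto
  qed
  have claim2: "\<And>x. x \<in> A \<Longrightarrow> (m x x0, x0) \<notin> R"
  proof
    fix x assume x: "x \<in> A" and r: "(m x x0, x0) \<in> R"
    have "lmult A m x \<in> H" unfolding H_def using gen[OF x] r lm[OF x0] by auto
    define Z where "Z = {w \<in> A. \<forall>z\<in>A. (m w z, z) \<in> R}"
    have xZ: "x \<in> Z" unfolding Z_def using Htriv[OF \<open>lmult A m x \<in> H\<close>] lm x by auto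
    have ZA: "Z \<subseteq> A" unfolding Z_def by auto
    have Zcl: "\<And>w y. w \<in> Z \<Longrightarrow> y \<in> A \<Longrightarrow> m y w \<in> Z"
    proof -
      fix w y assume w: "w \<in> Z" and y: "y \<in> A"
      have wA: "w \<in> A" using w ZA by auto
      have "\<forall>z\<in>A. (m (m y w) z, z) \<in> R"
      proof
        fix z assume z: "z \<in> A"
        have "m y ` A = A" using bij[OF y] unfolding bij_betw_def by auto
        then obtain u where u: "u \<in> A" "z = m y u" using z by auto
        have e: "m (m y w) z = m (m w y) (m w u)" using ci[OF y wA u(1)] u(2) by simp
        have r1: "(m w y, y) \<in> R" "(m w u, u) \<in> R" using w y u(1) unfolding Z_def by auto
        have "(m (m w y) (m w u), m y (m w u)) \<in> R" using rc[OF r1(1)] cl wA u(1) by auto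
        moreover have "(m y (m w u), m y u) \<in> R" using lc[OF r1(2) y] .
        ultimately show "(m (m y w) z, z) \<in> R" using Rtrans e u(2) by metis
      qed
      then show "m y w \<in> Z" unfolding Z_def using cl y wA by auto
    qed
    have presZ: "\<And>g. g \<in> carrier G \<Longrightarrow> \<forall>w\<in>Z. g w \<in> Z"
    proof -
      fix g assume g: "g \<in> carrier G"
      show "\<forall>w\<in>Z. g w \<in> Z"
      proof (rule pg_induct[OF cs g[unfolded G_def]])
        show "\<forall>w\<in>Z. (\<lambda>x\<in>A. x) w \<in> Z" using ZA by auto
      next
        fix y assume y: "y \<in> A"
        show "\<forall>w\<in>Z. lmult A m y w \<in> Z" using Zcl y lm ZA by auto
      next
        fix y assume y: "y \<in> A"
        show "\<forall>w\<in>Z. (\<lambda>z\<in>A. inv_into A (lmult A m y) z) w \<in> Z"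
        proof
          fix w assume w: "w \<in> Z"
          have "m y ` Z \<subseteq> Z" using Zcl y by auto
          from fin_inv_closed[OF fin bij[OF y] ZA this w] obtain s where s: "s \<in> Z" "w = m y s" by blast
          then show "(\<lambda>z\<in>A. inv_into A (lmult A m y) z) w \<in> Z" using lminv[OF y] ZA w by auto
        qed
      next
        fix g h
        assume "g \<in> carrier (perm_group A m)" "h \<in> carrier (perm_group A m)"
          "\<forall>w\<in>Z. g w \<in> Z" "\<forall>w\<in>Z. h w \<in> Z"
        then show "\<forall>w\<in>Z. (g \<otimes>\<^bsub>perm_group A m\<^esub> h) w \<in> Z"
          using mult[unfolded G_def] ZA by auto
      qed
    qed
    have allZ: "A \<subseteq> Z"
    proof
      fix a assume a: "a \<in> A"
      obtain g where "g \<in> carrier G" "g x = a" using tr[OF x a] by blast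
      then show "a \<in> Z" using presZ xZ by auto
    qed
    have presT: "\<And>g. g \<in> carrier G \<Longrightarrow> \<forall>z\<in>A. (g z, z) \<in> R"
    proof -
      fix g assume g: "g \<in> carrier G"
      show "\<forall>z\<in>A. (g z, z) \<in> R"
      proof (rule pg_induct[OF cs g[unfolded G_def]])
        show "\<forall>z\<in>A. ((\<lambda>x\<in>A. x) z, z) \<in> R" using Rrefl by auto
      next
        fix y assume y: "y \<in> A"
        show "\<forall>z\<in>A. (lmult A m y z, z) \<in> R" using allZ y lm unfolding Z_def by auto
      next
        fix y assume y: "y \<in> A"
        show "\<forall>z\<in>A. ((\<lambda>z\<in>A. inv_into A (lmult A m y) z) z, z) \<in> R"
        proof
          fix z assume z: "z \<in> A"
          have "m y ` A = A" using bij[OF y] unfolding bij_betw_def by auto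
          then obtain u where u: "u \<in> A" "z = m y u" using z by auto
          have "(m y u, u) \<in> R" using allZ y u(1) unfolding Z_def by auto
          then show "((\<lambda>z\<in>A. inv_into A (lmult A m y) z) z, z) \<in> R"
            using lminv[OF y u(1)] u z Rsym by auto
        qed
      next
        fix g h
        assume "g \<in> carrier (perm_group A m)" "h \<in> carrier (perm_group A m)"
          "\<forall>z\<in>A. (g z, z) \<in> R" "\<forall>z\<in>A. (h z, z) \<in> R"
        then show "\<forall>z\<in>A. ((g \<otimes>\<^bsub>perm_group A m\<^esub> h) z, z) \<in> R"
          using mult[unfolded G_def] inA[unfolded G_def] presR[unfolded G_def] Rtrans by metis
      qed
    qed
    have "A \<times> A \<subseteq> R"
    proof
      fix p assume "p \<in> A \<times> A"
      then obtain a b where ab: "p = (a, b)" "a \<in> A" "b \<in> A" by auto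
      obtain g where g: "g \<in> carrier G" "g x0 = a" using tr[OF x0 ab(2)] by blast
      obtain h where h: "h \<in> carrier G" "h x0 = b" using tr[OF x0 ab(3)] by blast
      have "(a, x0) \<in> R" "(b, x0) \<in> R" using presT[OF g(1)] presT[OF h(1)] x0 g(2) h(2) by auto
      then show "p \<in> R" using ab(1) Rsym Rtrans by blast
    qed
    then show False using nt by simp
  qed
  have eqR': "equiv A R'"
    unfolding R'_def equiv_def refl_on_def sym_def trans_def
    using Rrefl Rsym Rtrans cl by blast
  define F where "F x = R `` {m x x0}" for x
  have finQ: "finite (A // R)" using finite_quotient[OF fin Rsub] .
  have x0Q: "R `` {x0} \<in> A // R" using x0 by (rule quotientI)
  have FA: "F ` A \<subseteq> (A // R) - {R `` {x0}}"
  proof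
    fix c assume "c \<in> F ` A"
    then obtain x where x: "x \<in> A" "c = F x" by auto
    have "R `` {m x x0} \<noteq> R `` {x0}"
      using claim2[OF x(1)] eq_equiv_class_iff[OF eqR cl[OF x(1) x0] x0] by simp
    then show "c \<in> (A // R) - {R `` {x0}}" using x quotientI[OF cl[OF x(1) x0]] unfolding F_def by auto
  qed
  have c1: "card (F ` A) < card (A // R)"
  proof -
    have "card (F ` A) \<le> card ((A // R) - {R `` {x0}})" using card_mono[OF _ FA] finQ by auto
    also have "\<dots> < card (A // R)" using card_Diff1_less[OF finQ x0Q] .
    finally show ?thesis .
  qed
  have sub: "A // R' \<subseteq> (\<lambda>c. R' `` {SOME x. x \<in> A \<and> F x = c}) ` (F ` A)"
  proof
    fix C assume "C \<in> A // R'"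
    then obtain x where x: "x \<in> A" "C = R' `` {x}" by (auto elim: quotientE)
    have "\<exists>x'. x' \<in> A \<and> F x' = F x" using x by auto
    then have sx: "(SOME x'. x' \<in> A \<and> F x' = F x) \<in> A \<and> F (SOME x'. x' \<in> A \<and> F x' = F x) = F x"
      by (rule someI_ex)
    define x' where "x' = (SOME x'. x' \<in> A \<and> F x' = F x)"
    have x'A: "x' \<in> A" and Fx': "F x' = F x" using sx unfolding x'_def by auto
    have "(m x' x0, m x x0) \<in> R"
      using Fx' eq_equiv_class_iff[OF eqR cl[OF x'A x0] cl[OF x(1) x0]] unfolding F_def by simp
    then have "(x', x) \<in> R'" using claim1[OF x'A x(1)] by simp
    then have "R' `` {x'} = R' `` {x}" using equiv_class_eq[OF eqR'] by simp
    then show "C \<in> (\<lambda>c. R' `` {SOME x. x \<in> A \<and> F x = c}) ` (F ` A)"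
      using x unfolding x'_def by auto
  qed
  have "card (A // R') \<le> card (F ` A)"
  proof -
    have "finite (F ` A)" using fin by simp
    then have "card (A // R') \<le> card ((\<lambda>c. R' `` {SOME x. x \<in> A \<and> F x = c}) ` (F ` A))"
      using card_mono[OF _ sub] by auto
    also have "\<dots> \<le> card (F ` A)" by (rule card_image_le) (use fin in simp)
    finally show ?thesis .
  qed
  then show ?thesis using c1 unfolding R'_def by simp
qed

theorem mainTheorem7:
  fixes A :: "'a set" and m :: "'a \<Rightarrow> 'a \<Rightarrow> 'a"
  assumes "finite A"
    and "nondeg_cycle_set A m"
    and "uniconnected A m"
    and "dedekind_group (perm_group A m)"
  shows "finite_mpl A m"
proof -
  have cs: "cycle_set A m" using assms(2) unfolding nondeg_cycle_set_def by simp
  have cl: "\<And>a b. a \<in> A \<Longrightarrow> b \<in> A \<Longrightarrow> m a b \<in> A" using cs unfolding cycle_set_def by auto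
  have Ane: "A \<noteq> {}" using assms(3) unfolding uniconnected_def by auto
  have eqn: "equiv A (ret_rel A m n)" for n
    unfolding ret_rel_def equiv_def refl_on_def sym_def trans_def
    using re_refl re_sym re_trans by fast
  have lcn: "\<And>x y z. (x, y) \<in> ret_rel A m n \<Longrightarrow> z \<in> A \<Longrightarrow> (m z x, m z y) \<in> ret_rel A m n" for n
    unfolding ret_rel_def using re_left[OF cs] cl by auto
  have rcn: "\<And>x y z. (x, y) \<in> ret_rel A m n \<Longrightarrow> z \<in> A \<Longrightarrow> (m x z, m y z) \<in> ret_rel A m n" for n
    unfolding ret_rel_def using re_mono[OF cs] cl by auto
  have suc: "ret_rel A m (Suc n) = {(x, y). x \<in> A \<and> y \<in> A \<and> (\<forall>z\<in>A. (m x z, m y z) \<in> ret_rel A m n)}" for n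
    unfolding ret_rel_def using cl by auto
  have ge1: "card (Ret_iter A m n) \<ge> 1" for n
  proof -
    have "finite (Ret_iter A m n)" unfolding Ret_iter_def
      using finite_quotient[OF assms(1)] eqn equiv_type by blast
    moreover have "Ret_iter A m n \<noteq> {}" unfolding Ret_iter_def using Ane quotient_is_empty by blast
    ultimately show ?thesis by (simp add: Suc_le_eq card_gt_0_iff)
  qed
  have dec: "card (Ret_iter A m (Suc n)) < card (Ret_iter A m n)" if ne: "card (Ret_iter A m n) \<noteq> 1" for n
  proof -
    have nt: "\<not> A \<times> A \<subseteq> ret_rel A m n"
    proof
      assume full: "A \<times> A \<subseteq> ret_rel A m n"
      have sub: "ret_rel A m n \<subseteq> A \<times> A" using eqn equiv_type by blast
      have "\<And>a. a \<in> A \<Longrightarrow> ret_rel A m n `` {a} = A" using full sub by auto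
      then have "A // ret_rel A m n = {A}" unfolding quotient_def using Ane by auto
      then show False using ne unfolding Ret_iter_def by simp
    qed
    show ?thesis unfolding Ret_iter_def suc
      using step[OF assms(1) cs assms(3) assms(4) eqn lcn rcn nt] by simp
  qed
  show ?thesis
  proof (rule ccontr)
    assume "\<not> finite_mpl A m"
    then have ne: "\<And>n. card (Ret_iter A m n) \<noteq> 1" unfolding finite_mpl_def by auto
    have "card (Ret_iter A m n) + n \<le> card (Ret_iter A m 0)" for n
    proof (induction n)
      case 0 then show ?case by simp
    next
      case (Suc n) then show ?case using dec[OF ne[of n]] by simp
    qed
    from this[of "card (Ret_iter A m 0) + 1"] ge1[of "card (Ret_iter A m 0) + 1"] show False by simp
  qed
qed

end
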